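(* Let $Q$ be a commutative automorphic loop of nilpotency class $3$. Then $(a,b,c)=(c,b,a)^{-1}$ and $(a,b,c)=(a,c,b)(b,a,c)$ for every $a,b,c\in Q$.
   Context: A loop is a set with a binary operation such that all left and right translations $L_a:b\mapsto ab$, $R_a:b\mapsto ba$ are bijections and there is a two-sided identity $1$. The inner mapping group is the stabilizer of $1$ in the group generated by all translations; $Q$ is automorphic if all inner mappings are automorphisms (such loops are power-associative, so inverses are two-sided). The associator $(a,b,c)$ is defined by $(ab)c=(a(bc))(a,b,c)$. The center $Z(Q)$ is the set of elements fixed by all inner mappings; $Z_0=1$, $Z_{i+1}(Q)$ is the preimage of $Z(Q/Z_i(Q))$, and $Q$ has nilpotency class $n$ if $Z_{n-1}(Q)\neq Q=Z_n(Q)$. *)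

theory Defs
  imports Main "HOL-Library.FuncSet"
begin

definition loop :: "'a set \<Rightarrow> ('a \<Rightarrow> 'a \<Rightarrow> 'a) \<Rightarrow> 'a \<Rightarrow> bool" where
  "loop Q m e \<longleftrightarrow> e \<in> Q \<and> (\<forall>a\<in>Q. \<forall>b\<in>Q. m a b \<in> Q)
     \<and> (\<forall>a\<in>Q. m e a = a \<and> m a e = a)
     \<and> (\<forall>a\<in>Q. bij_betw (\<lambda>b. m a b) Q Q \<and> bij_betw (\<lambda>b. m b a) Q Q)"

inductive_set mlt :: "'a set \<Rightarrow> ('a \<Rightarrow> 'a \<Rightarrow> 'a) \<Rightarrow> ('a \<Rightarrow> 'a) set"
  for Q :: "'a set" and m :: "'a \<Rightarrow> 'a \<Rightarrow> 'a" where
  mlt_id: "(\<lambda>x\<in>Q. x) \<in> mlt Q m"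
| mlt_L: "f \<in> mlt Q m \<Longrightarrow> a \<in> Q \<Longrightarrow> (\<lambda>x\<in>Q. m a (f x)) \<in> mlt Q m"
| mlt_R: "f \<in> mlt Q m \<Longrightarrow> a \<in> Q \<Longrightarrow> (\<lambda>x\<in>Q. m (f x) a) \<in> mlt Q m"
| mlt_Linv: "f \<in> mlt Q m \<Longrightarrow> a \<in> Q \<Longrightarrow>
     (\<lambda>x\<in>Q. the_inv_into Q (\<lambda>y. m a y) (f x)) \<in> mlt Q m"
| mlt_Rinv: "f \<in> mlt Q m \<Longrightarrow> a \<in> Q \<Longrightarrow>
     (\<lambda>x\<in>Q. the_inv_into Q (\<lambda>y. m y a) (f x)) \<in> mlt Q m"

definition inner :: "'a set \<Rightarrow> ('a \<Rightarrow> 'a \<Rightarrow> 'a) \<Rightarrow> 'a \<Rightarrow> ('a \<Rightarrow> 'a) set" where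
  "inner Q m e = {f \<in> mlt Q m. f e = e}"

definition automorphic_loop :: "'a set \<Rightarrow> ('a \<Rightarrow> 'a \<Rightarrow> 'a) \<Rightarrow> 'a \<Rightarrow> bool" where
  "automorphic_loop Q m e \<longleftrightarrow> loop Q m e \<and>
     (\<forall>f\<in>inner Q m e. bij_betw f Q Q \<and> (\<forall>x\<in>Q. \<forall>y\<in>Q. f (m x y) = m (f x) (f y)))"

definition commutative_loop :: "'a set \<Rightarrow> ('a \<Rightarrow> 'a \<Rightarrow> 'a) \<Rightarrow> bool" where
  "commutative_loop Q m \<longleftrightarrow> (\<forall>a\<in>Q. \<forall>b\<in>Q. m a b = m b a)"

definition loop_center :: "'a set \<Rightarrow> ('a \<Rightarrow> 'a \<Rightarrow> 'a) \<Rightarrow> 'a \<Rightarrow> 'a set" where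
  "loop_center Q m e = {x \<in> Q. \<forall>f\<in>inner Q m e. f x = x}"

definition lcoset :: "('a \<Rightarrow> 'a \<Rightarrow> 'a) \<Rightarrow> 'a \<Rightarrow> 'a set \<Rightarrow> 'a set" where
  "lcoset m x N = (\<lambda>n. m x n) ` N"

definition quot_carrier :: "'a set \<Rightarrow> ('a \<Rightarrow> 'a \<Rightarrow> 'a) \<Rightarrow> 'a set \<Rightarrow> 'a set set" where
  "quot_carrier Q m N = {lcoset m x N | x. x \<in> Q}"

definition quot_mult :: "('a \<Rightarrow> 'a \<Rightarrow> 'a) \<Rightarrow> 'a set \<Rightarrow> 'a set \<Rightarrow> 'a set \<Rightarrow> 'a set" where
  "quot_mult m N A B = lcoset m (m (SOME a. a \<in> A) (SOME b. b \<in> B)) N"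

fun upper_center :: "'a set \<Rightarrow> ('a \<Rightarrow> 'a \<Rightarrow> 'a) \<Rightarrow> 'a \<Rightarrow> nat \<Rightarrow> 'a set" where
  "upper_center Q m e 0 = {e}"
| "upper_center Q m e (Suc i) =
     {x \<in> Q. lcoset m x (upper_center Q m e i) \<in>
        loop_center (quot_carrier Q m (upper_center Q m e i))
                    (quot_mult m (upper_center Q m e i)) (upper_center Q m e i)}"

definition nilpotency_class :: "'a set \<Rightarrow> ('a \<Rightarrow> 'a \<Rightarrow> 'a) \<Rightarrow> 'a \<Rightarrow> nat \<Rightarrow> bool" where
  "nilpotency_class Q m e n \<longleftrightarrow>
     upper_center Q m e (n - 1) \<noteq> Q \<and> upper_center Q m e n = Q"

definition associator :: "'a set \<Rightarrow> ('a \<Rightarrow> 'a \<Rightarrow> 'a) \<Rightarrow> 'a \<Rightarrow> 'a \<Rightarrow> 'a \<Rightarrow> 'a" where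
  "associator Q m a b c = the_inv_into Q (\<lambda>d. m (m a (m b c)) d) (m (m a b) c)"

text \<open>Inverse: the unique y with x y = 1 (two-sided in automorphic loops).\<close>

definition loop_inv :: "'a set \<Rightarrow> ('a \<Rightarrow> 'a \<Rightarrow> 'a) \<Rightarrow> 'a \<Rightarrow> 'a \<Rightarrow> 'a" where
  "loop_inv Q m e x = the_inv_into Q (\<lambda>y. m x y) e"

end

theory Submission
  imports Defs
begin
locale cloop =
  fixes C :: "'a set" and f :: "'a \<Rightarrow> 'a \<Rightarrow> 'a" and E :: 'a
  assumes lp: "loop C f E" and cm: "commutative_loop C f"
begin

lemma E_in: "E \<in> C" using lp by (simp add: loop_def)
lemma cl: "a \<in> C \<Longrightarrow> b \<in> C \<Longrightarrow> f a b \<in> C" using lp by (simp add: loop_def)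
lemma idl: "a \<in> C \<Longrightarrow> f E a = a" using lp by (simp add: loop_def)
lemma idr: "a \<in> C \<Longrightarrow> f a E = a" using lp by (simp add: loop_def)
lemma com: "a \<in> C \<Longrightarrow> b \<in> C \<Longrightarrow> f a b = f b a" using cm by (simp add: commutative_loop_def)
lemma bijL: "a \<in> C \<Longrightarrow> bij_betw (f a) C C" using lp unfolding loop_def by blast
lemma bijR: "a \<in> C \<Longrightarrow> bij_betw (\<lambda>b. f b a) C C" using lp unfolding loop_def by blast
lemma injL: "a \<in> C \<Longrightarrow> inj_on (f a) C" using bijL bij_betw_def by blast
lemma injR: "a \<in> C \<Longrightarrow> inj_on (\<lambda>b. f b a) C" using bijR bij_betw_def by blast
lemma canc: "a\<in>C \<Longrightarrow> x\<in>C \<Longrightarrow> y\<in>C \<Longrightarrow> f a x = f a y \<Longrightarrow> x = y"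
  using injL inj_onD by metis
lemma ld_in: "a\<in>C \<Longrightarrow> w\<in>C \<Longrightarrow> the_inv_into C (f a) w \<in> C"
  by (metis bijL bij_betw_def the_inv_into_into order_refl)
lemma f_ld: "a\<in>C \<Longrightarrow> w\<in>C \<Longrightarrow> f a (the_inv_into C (f a) w) = w"
  by (metis bijL bij_betw_def f_the_inv_into_f)
lemma ld_f: "a\<in>C \<Longrightarrow> x\<in>C \<Longrightarrow> the_inv_into C (f a) (f a x) = x"
  by (metis injL the_inv_into_f_f)
lemma rd_in: "a\<in>C \<Longrightarrow> w\<in>C \<Longrightarrow> the_inv_into C (\<lambda>b. f b a) w \<in> C"
  by (metis bijR bij_betw_def the_inv_into_into order_refl)
lemma f_rd: "a\<in>C \<Longrightarrow> w\<in>C \<Longrightarrow> f (the_inv_into C (\<lambda>b. f b a) w) a = w"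
  using f_the_inv_into_f[of "\<lambda>b. f b a" C w] bijR bij_betw_def by metis
lemma rd_f: "a\<in>C \<Longrightarrow> x\<in>C \<Longrightarrow> the_inv_into C (\<lambda>b. f b a) (f x a) = x"
  using the_inv_into_f_f[of "\<lambda>b. f b a" C x] injR by metis

lemma mlt_L3: "a\<in>C \<Longrightarrow> b\<in>C \<Longrightarrow> c\<in>C \<Longrightarrow>
   (\<lambda>y\<in>C. the_inv_into C (f c) (f a (f b y))) \<in> mlt C f"
proof -
  assume a: "a\<in>C" "b\<in>C" "c\<in>C"
  have "(\<lambda>x\<in>C. the_inv_into C (\<lambda>y. f c y) ((\<lambda>x\<in>C. f a ((\<lambda>x\<in>C. f b ((\<lambda>x\<in>C. x) x)) x)) x)) \<in> mlt C f"
    using a by (intro mlt.intros) auto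
  moreover have "(\<lambda>x\<in>C. the_inv_into C (\<lambda>y. f c y) ((\<lambda>x\<in>C. f a ((\<lambda>x\<in>C. f b ((\<lambda>x\<in>C. x) x)) x)) x))
      = (\<lambda>y\<in>C. the_inv_into C (f c) (f a (f b y)))"
    by (rule ext) (simp add: restrict_def)
  ultimately show ?thesis by simp
qed

lemma mlt_in: "g \<in> mlt C f \<Longrightarrow> y \<in> C \<Longrightarrow> g y \<in> C"
  by (induction arbitrary: y rule: mlt.induct) (auto simp: cl ld_in rd_in)

definition nuc :: "'a \<Rightarrow> bool" where
  "nuc z \<longleftrightarrow> (\<forall>a\<in>C. \<forall>b\<in>C. f a (f b z) = f (f a b) z)"

lemma swapz: assumes z: "z\<in>C" "nuc z" and "a\<in>C" "w\<in>C"
  shows "f a (f z w) = f z (f a w)"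
proof -
  have "f a (f z w) = f a (f w z)" using assms com by simp
  also have "\<dots> = f (f a w) z" using assms unfolding nuc_def by blast
  also have "\<dots> = f z (f a w)" using assms com cl by simp
  finally show ?thesis .
qed

lemma mlt_commz: assumes z: "z\<in>C" "nuc z"
  shows "g \<in> mlt C f \<Longrightarrow> \<forall>y\<in>C. g (f z y) = f z (g y)"
proof (induction rule: mlt.induct)
  case mlt_id
  then show ?case using z cl by simp
next
  case (mlt_L g a)
  show ?case proof
    fix y assume y: "y\<in>C"
    have gy: "g y \<in> C" using mlt_L.hyps y mlt_in by blast
    have "(\<lambda>x\<in>C. f a (g x)) (f z y) = f a (g (f z y))" using z y cl by simp
    also have "\<dots> = f a (f z (g y))" using mlt_L.IH y by simp
    also have "\<dots> = f z (f a (g y))" using swapz[OF z mlt_L.hyps(2) gy] .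
    finally show "(\<lambda>x\<in>C. f a (g x)) (f z y) = f z ((\<lambda>x\<in>C. f a (g x)) y)" using y by simp
  qed
next
  case (mlt_R g a)
  show ?case proof
    fix y assume y: "y\<in>C"
    have gy: "g y \<in> C" using mlt_R.hyps y mlt_in by blast
    have "(\<lambda>x\<in>C. f (g x) a) (f z y) = f (g (f z y)) a" using z y cl by simp
    also have "\<dots> = f a (f z (g y))" using mlt_R.IH y com z gy cl mlt_R.hyps by simp
    also have "\<dots> = f z (f a (g y))" using swapz[OF z mlt_R.hyps(2) gy] .
    also have "\<dots> = f z (f (g y) a)" using com gy mlt_R.hyps by simp
    finally show "(\<lambda>x\<in>C. f (g x) a) (f z y) = f z ((\<lambda>x\<in>C. f (g x) a) y)" using y by simp
  qed
next
  case (mlt_Linv g a)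
  show ?case proof
    fix y assume y: "y\<in>C"
    have gy: "g y \<in> C" using mlt_Linv.hyps y mlt_in by blast
    define w where "w = the_inv_into C (f a) (g y)"
    have w: "w \<in> C" "f a w = g y" using w_def ld_in f_ld gy mlt_Linv.hyps by auto
    have "f a (f z w) = f z (g y)" using swapz[OF z mlt_Linv.hyps(2) w(1)] w by simp
    hence "the_inv_into C (f a) (f z (g y)) = f z w"
      using ld_f[of a "f z w"] cl z w mlt_Linv.hyps by metis
    thus "(\<lambda>x\<in>C. the_inv_into C (\<lambda>y. f a y) (g x)) (f z y) =
          f z ((\<lambda>x\<in>C. the_inv_into C (\<lambda>y. f a y) (g x)) y)"
      using y z cl mlt_Linv.IH w_def by simp
  qed
next
  case (mlt_Rinv g a)
  show ?case proof
    fix y assume y: "y\<in>C"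
    have gy: "g y \<in> C" using mlt_Rinv.hyps y mlt_in by blast
    define w where "w = the_inv_into C (\<lambda>b. f b a) (g y)"
    have w: "w \<in> C" "f w a = g y" using w_def rd_in f_rd gy mlt_Rinv.hyps by auto
    have "f (f z w) a = f a (f z w)" using com cl z w mlt_Rinv.hyps by simp
    also have "\<dots> = f z (f a w)" using swapz[OF z mlt_Rinv.hyps(2) w(1)] .
    also have "\<dots> = f z (g y)" using w com mlt_Rinv.hyps by simp
    finally have "the_inv_into C (\<lambda>b. f b a) (f z (g y)) = f z w"
      using rd_f[of a "f z w"] cl z w mlt_Rinv.hyps by metis
    thus "(\<lambda>x\<in>C. the_inv_into C (\<lambda>y. f y a) (g x)) (f z y) =
          f z ((\<lambda>x\<in>C. the_inv_into C (\<lambda>y. f y a) (g x)) y)"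
      using y z cl mlt_Rinv.IH w_def by simp
  qed
qed

lemma center_iff: "z \<in> loop_center C f E \<longleftrightarrow> z \<in> C \<and> nuc z"
proof
  assume zc: "z \<in> loop_center C f E"
  hence z: "z \<in> C" by (simp add: loop_center_def)
  have "nuc z" unfolding nuc_def
  proof (intro ballI)
    fix a b assume ab: "a\<in>C" "b\<in>C"
    let ?g = "\<lambda>y\<in>C. the_inv_into C (f (f a b)) (f a (f b y))"
    have "?g \<in> mlt C f" using mlt_L3 ab cl by blast
    moreover have "?g E = E" using ab E_in idr cl ld_f[of "f a b" E] by simp
    ultimately have "?g \<in> inner C f E" by (simp add: inner_def)
    hence "?g z = z" using zc unfolding loop_center_def by blast
    hence "the_inv_into C (f (f a b)) (f a (f b z)) = z" using z by (simp only: restrict_apply' )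
    thus "f a (f b z) = f (f a b) z" using f_ld[of "f a b" "f a (f b z)"] ab z cl by metis
  qed
  thus "z \<in> C \<and> nuc z" using z by simp
next
  assume z: "z \<in> C \<and> nuc z"
  show "z \<in> loop_center C f E" unfolding loop_center_def inner_def
  proof (simp add: z, intro allI impI, elim conjE)
    fix g assume g: "g \<in> mlt C f" "g E = E"
    have "g (f z E) = f z (g E)" using mlt_commz[OF _ _ g(1)] z E_in by blast
    thus "g z = z" using g z idr E_in by simp
  qed
qed

end

context cloop begin

definition good :: "'a set \<Rightarrow> bool" where
  "good N \<longleftrightarrow> E \<in> N \<and> N \<subseteq> C \<and> (\<forall>x\<in>C. \<forall>y\<in>lcoset f x N. lcoset f y N = lcoset f x N)
    \<and> (\<forall>a\<in>C. \<forall>b\<in>C. \<forall>n\<in>N. \<forall>n'\<in>N. f (f a n) (f b n') \<in> lcoset f (f a b) N)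
    \<and> (\<forall>c\<in>C. \<forall>t\<in>C. \<forall>n\<in>N. \<exists>n'\<in>N. f (f c t) n = f c (f t n'))"

lemma lc_mem: "y \<in> lcoset f x N \<longleftrightarrow> (\<exists>n\<in>N. y = f x n)"
  by (auto simp: lcoset_def)

context fixes N assumes gN: "good N" begin

lemma EN: "E \<in> N" using gN unfolding good_def by blast
lemma NC: "N \<subseteq> C" using gN unfolding good_def by blast
lemma P1: "x\<in>C \<Longrightarrow> y \<in> lcoset f x N \<Longrightarrow> lcoset f y N = lcoset f x N" using gN unfolding good_def by blast
lemma P2: "a\<in>C \<Longrightarrow> b\<in>C \<Longrightarrow> n\<in>N \<Longrightarrow> n'\<in>N \<Longrightarrow> f (f a n) (f b n') \<in> lcoset f (f a b) N"
  using gN unfolding good_def by blast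
lemma P3: "c\<in>C \<Longrightarrow> t\<in>C \<Longrightarrow> n\<in>N \<Longrightarrow> \<exists>n'\<in>N. f (f c t) n = f c (f t n')"
  using gN unfolding good_def by blast

lemma self_in: "x\<in>C \<Longrightarrow> x \<in> lcoset f x N"
proof -
  assume x: "x\<in>C"
  have "f x E \<in> lcoset f x N" using EN by (simp add: lcoset_def)
  thus ?thesis using idr x by simp
qed

lemma lc_sub: "x\<in>C \<Longrightarrow> lcoset f x N \<subseteq> C"
  using NC cl by (auto simp: lcoset_def)

lemma cos_eq_iff: assumes "p\<in>C" "q\<in>C"
  shows "lcoset f p N = lcoset f q N \<longleftrightarrow> (\<exists>\<mu>\<in>N. q = f p \<mu>)"
proof
  assume h: "lcoset f p N = lcoset f q N"
  have "q \<in> lcoset f q N" by (rule self_in[OF assms(2)])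
  hence "q \<in> lcoset f p N" by (simp only: h)
  thus "\<exists>\<mu>\<in>N. q = f p \<mu>" by (simp only: lc_mem)
next
  assume "\<exists>\<mu>\<in>N. q = f p \<mu>"
  hence "q \<in> lcoset f p N" by (simp only: lc_mem)
  thus "lcoset f p N = lcoset f q N" using P1[OF assms(1)] by simp
qed

lemma cos_mu: assumes "p\<in>C" "\<mu>\<in>N" shows "lcoset f (f p \<mu>) N = lcoset f p N"
proof -
  have "f p \<mu> \<in> lcoset f p N" unfolding lc_mem using assms(2) by blast
  thus ?thesis by (rule P1[OF assms(1)])
qed

lemma cos_mult: assumes "p\<in>C" "p'\<in>C" "q\<in>C" "q'\<in>C"
   "lcoset f p N = lcoset f p' N" "lcoset f q N = lcoset f q' N"
  shows "lcoset f (f p q) N = lcoset f (f p' q') N"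
proof -
  obtain \<mu> where "\<mu>\<in>N" "p' = f p \<mu>" using assms(5) cos_eq_iff[OF assms(1,2)] by blast
  moreover obtain \<mu>' where "\<mu>'\<in>N" "q' = f q \<mu>'" using assms(6) cos_eq_iff[OF assms(3,4)] by blast
  ultimately have "f p' q' \<in> lcoset f (f p q) N" using P2 assms by simp
  thus ?thesis using P1[OF cl[OF assms(1,3)]] by simp
qed

lemma cos_canc: assumes "c\<in>C" "p\<in>C" "q\<in>C" "lcoset f (f c p) N = lcoset f (f c q) N"
  shows "lcoset f p N = lcoset f q N"
proof -
  obtain \<mu> where mu: "\<mu>\<in>N" "f c q = f (f c p) \<mu>" using assms(4) cos_eq_iff[OF cl[OF assms(1,2)] cl[OF assms(1,3)]] by blast
  obtain n' where n': "n'\<in>N" "f (f c p) \<mu> = f c (f p n')" using P3[OF assms(1,2) mu(1)] by blast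
  have "q = f p n'" using canc[of c q "f p n'"] assms mu n' NC cl by auto
  thus ?thesis using cos_eq_iff[OF assms(2,3)] n' by blast
qed

lemma qm_lc: assumes "a\<in>C" "b\<in>C"
  shows "quot_mult f N (lcoset f a N) (lcoset f b N) = lcoset f (f a b) N"
proof -
  define a' where "a' = (SOME x. x \<in> lcoset f a N)"
  define b' where "b' = (SOME x. x \<in> lcoset f b N)"
  have "a' \<in> lcoset f a N" unfolding a'_def by (rule someI[where P="\<lambda>x. x \<in> lcoset f a N", OF self_in[OF assms(1)]])
  then obtain n where n: "n\<in>N" "a' = f a n" using lc_mem by blast
  have "b' \<in> lcoset f b N" unfolding b'_def by (rule someI[where P="\<lambda>x. x \<in> lcoset f b N", OF self_in[OF assms(2)]])
  then obtain n' where n': "n'\<in>N" "b' = f b n'" using lc_mem by blast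
  have "f a' b' \<in> lcoset f (f a b) N" using P2 assms n n' by simp
  hence "lcoset f (f a' b') N = lcoset f (f a b) N" using P1 assms cl by blast
  thus ?thesis unfolding quot_mult_def a'_def b'_def .
qed

lemma qc_iff: "X \<in> quot_carrier C f N \<longleftrightarrow> (\<exists>x\<in>C. X = lcoset f x N)"
  by (auto simp: quot_carrier_def)
lemma qcE: "X \<in> quot_carrier C f N \<Longrightarrow> (\<And>x. x\<in>C \<Longrightarrow> X = lcoset f x N \<Longrightarrow> P) \<Longrightarrow> P"
  unfolding quot_carrier_def by blast
lemma qcI: "x\<in>C \<Longrightarrow> lcoset f x N \<in> quot_carrier C f N"
  unfolding quot_carrier_def by blast

lemma lc_E: "lcoset f E N = N"
  using NC idl by (force simp: lcoset_def)

lemma quot_loop: "cloop (quot_carrier C f N) (quot_mult f N) N"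
proof -
  let ?QC = "quot_carrier C f N" and ?qm = "quot_mult f N"
  have Lbij: "bij_betw (?qm A) ?QC ?QC" if A: "A \<in> ?QC" for A
  proof -
    obtain a where a: "a\<in>C" "A = lcoset f a N" using qcE[OF A] by blast
    have inj: "inj_on (?qm A) ?QC"
    proof (rule inj_onI)
      fix X Y assume X: "X\<in>?QC" and Y: "Y\<in>?QC" and eq: "?qm A X = ?qm A Y"
      obtain x y where xy: "x\<in>C" "y\<in>C" "X = lcoset f x N" "Y = lcoset f y N" using qcE[OF X] qcE[OF Y] by metis
      have "lcoset f (f a x) N = lcoset f (f a y) N" using eq qm_lc a xy by simp
      hence "lcoset f x N = lcoset f y N" by (rule cos_canc[OF a(1) xy(1,2)])
      thus "X = Y" using xy by simp
    qed
    have "?qm A ` ?QC = ?QC"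
    proof
      show "?qm A ` ?QC \<subseteq> ?QC"
      proof
        fix W assume "W \<in> ?qm A ` ?QC"
        then obtain X where X: "X \<in> ?QC" "W = ?qm A X" by blast
        then obtain x where x: "x\<in>C" "X = lcoset f x N" using qcE by blast
        have "W = lcoset f (f a x) N" using X(2) x a qm_lc by simp
        thus "W \<in> ?QC" using qcI[OF cl[OF a(1) x(1)]] by simp
      qed
      show "?QC \<subseteq> ?qm A ` ?QC"
      proof
        fix W assume "W \<in> ?QC"
        then obtain w where w: "w\<in>C" "W = lcoset f w N" using qcE by blast
        define t where "t = the_inv_into C (f a) w"
        have t: "t\<in>C" "f a t = w" using t_def ld_in f_ld a w by auto
        have "W = ?qm A (lcoset f t N)" using qm_lc a t w by simp
        moreover have "lcoset f t N \<in> ?QC" using qcI t by blast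
        ultimately show "W \<in> ?qm A ` ?QC" by blast
      qed
    qed
    thus ?thesis using inj bij_betw_def by blast
  qed
  have commq: "?qm A B = ?qm B A" if H: "A \<in> ?QC" "B \<in> ?QC" for A B
  proof -
    obtain a b where "a\<in>C" "b\<in>C" "A = lcoset f a N" "B = lcoset f b N" using qcE[OF H(1)] qcE[OF H(2)] by metis
    hence "?qm A B = lcoset f (f a b) N" "?qm B A = lcoset f (f b a) N" using qm_lc by simp_all
    thus ?thesis using com[OF \<open>a\<in>C\<close> \<open>b\<in>C\<close>] by (simp only:)
  qed
  have "loop ?QC ?qm N" unfolding loop_def
  proof (intro conjI ballI)
    show "N \<in> ?QC"
    proof -
      have "N = lcoset f E N" using lc_E by simp
      thus ?thesis using qcI[OF E_in] by simp
    qed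
    show "?qm a b \<in> ?QC" if H: "a \<in> ?QC" "b \<in> ?QC" for a b
    proof -
      obtain x y where "x\<in>C" "y\<in>C" "a = lcoset f x N" "b = lcoset f y N" using qcE[OF H(1)] qcE[OF H(2)] by metis
      hence "?qm a b = lcoset f (f x y) N" using qm_lc by simp
      thus ?thesis using qcI[OF cl[OF \<open>x\<in>C\<close> \<open>y\<in>C\<close>]] by simp
    qed
    show "?qm N a = a" if H: "a \<in> ?QC" for a
    proof -
      obtain x where "x\<in>C" "a = lcoset f x N" using qcE[OF H] by blast
      have "?qm (lcoset f E N) (lcoset f x N) = lcoset f (f E x) N" by (rule qm_lc[OF E_in \<open>x\<in>C\<close>])
      thus ?thesis by (simp only: lc_E idl[OF \<open>x\<in>C\<close>] \<open>a = lcoset f x N\<close>)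
    qed
    show "?qm a N = a" if H: "a \<in> ?QC" for a
    proof -
      obtain x where "x\<in>C" "a = lcoset f x N" using qcE[OF H] by blast
      have "?qm (lcoset f x N) (lcoset f E N) = lcoset f (f x E) N" by (rule qm_lc[OF \<open>x\<in>C\<close> E_in])
      thus ?thesis by (simp only: lc_E idr[OF \<open>x\<in>C\<close>] \<open>a = lcoset f x N\<close>)
    qed
    show "bij_betw (?qm a) ?QC ?QC" if "a \<in> ?QC" for a using Lbij that by blast
    show "bij_betw (\<lambda>b. ?qm b a) ?QC ?QC" if "a \<in> ?QC" for a
      using Lbij[OF that] commq[OF _ that] bij_betw_cong[of ?QC "\<lambda>b. ?qm b a" "?qm a" ?QC] by simp
  qed
  moreover have "commutative_loop ?QC ?qm" unfolding commutative_loop_def using commq by blast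
  ultimately show ?thesis by (simp add: cloop_def)
qed

lemma quot_center: assumes x: "x\<in>C"
  shows "lcoset f x N \<in> loop_center (quot_carrier C f N) (quot_mult f N) N \<longleftrightarrow>
    (\<forall>a\<in>C. \<forall>b\<in>C. lcoset f (f a (f b x)) N = lcoset f (f (f a b) x) N)"
proof -
  interpret Qt: cloop "quot_carrier C f N" "quot_mult f N" N by (rule quot_loop)
  have xq: "lcoset f x N \<in> quot_carrier C f N" using qcI[OF x] .
  have "Qt.nuc (lcoset f x N) \<longleftrightarrow> (\<forall>a\<in>C. \<forall>b\<in>C. lcoset f (f a (f b x)) N = lcoset f (f (f a b) x) N)"
    unfolding Qt.nuc_def
  proof
    assume h: "\<forall>A\<in>quot_carrier C f N. \<forall>B\<in>quot_carrier C f N.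
       quot_mult f N A (quot_mult f N B (lcoset f x N)) = quot_mult f N (quot_mult f N A B) (lcoset f x N)"
    show "\<forall>a\<in>C. \<forall>b\<in>C. lcoset f (f a (f b x)) N = lcoset f (f (f a b) x) N"
    proof (intro ballI)
      fix a b assume ab: "a\<in>C" "b\<in>C"
      have "quot_mult f N (lcoset f a N) (quot_mult f N (lcoset f b N) (lcoset f x N))
         = quot_mult f N (quot_mult f N (lcoset f a N) (lcoset f b N)) (lcoset f x N)"
      proof -
        have aq: "lcoset f a N \<in> quot_carrier C f N" using qcI ab(1) by blast
        have bq: "lcoset f b N \<in> quot_carrier C f N" using qcI ab(2) by blast
        show ?thesis using h aq bq by blast
      qed
      thus "lcoset f (f a (f b x)) N = lcoset f (f (f a b) x) N" using qm_lc ab x cl by simp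
    qed
  next
    assume h: "\<forall>a\<in>C. \<forall>b\<in>C. lcoset f (f a (f b x)) N = lcoset f (f (f a b) x) N"
    show "\<forall>A\<in>quot_carrier C f N. \<forall>B\<in>quot_carrier C f N.
       quot_mult f N A (quot_mult f N B (lcoset f x N)) = quot_mult f N (quot_mult f N A B) (lcoset f x N)"
    proof (intro ballI)
      fix A B assume "A \<in> quot_carrier C f N" "B \<in> quot_carrier C f N"
      then obtain a b where ab: "a\<in>C" "b\<in>C" "A = lcoset f a N" "B = lcoset f b N" using qcE by metis
      show "quot_mult f N A (quot_mult f N B (lcoset f x N)) = quot_mult f N (quot_mult f N A B) (lcoset f x N)"
        using h ab qm_lc x cl by simp
    qed
  qed
  thus ?thesis using Qt.center_iff xq by blast
qed

end
end

context cloop begin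

context fixes N :: "'a set" begin
definition S where "S = {x\<in>C. \<forall>a\<in>C. \<forall>b\<in>C. lcoset f (f a (f b x)) N = lcoset f (f (f a b) x) N}"

lemma sC: "x\<in>S \<Longrightarrow> x\<in>C" unfolding S_def by blast
lemma sE: "x\<in>S \<Longrightarrow> a\<in>C \<Longrightarrow> b\<in>C \<Longrightarrow> lcoset f (f a (f b x)) N = lcoset f (f (f a b) x) N"
  unfolding S_def by blast
lemma sI: "x\<in>C \<Longrightarrow> (\<And>a b. a\<in>C \<Longrightarrow> b\<in>C \<Longrightarrow> lcoset f (f a (f b x)) N = lcoset f (f (f a b) x) N) \<Longrightarrow> x\<in>S"
  unfolding S_def by blast

end

context fixes N assumes gN: "good N" and nucN: "\<forall>\<mu>\<in>N. nuc \<mu>" begin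

lemma nucE: "\<mu>\<in>N \<Longrightarrow> a\<in>C \<Longrightarrow> b\<in>C \<Longrightarrow> f a (f b \<mu>) = f (f a b) \<mu>"
  using nucN unfolding nuc_def by blast

lemma NC': "\<mu>\<in>N \<Longrightarrow> \<mu>\<in>C" using NC[OF gN] by blast

lemma s_mu: assumes n: "n\<in>(S N)" and mu: "\<mu>\<in>N" shows "f n \<mu> \<in> (S N)"
proof (rule sI)
  have nC: "n\<in>C" using sC n . have mC: "\<mu>\<in>C" using NC' mu .
  show "f n \<mu> \<in> C" using cl nC mC by simp
  fix a b assume ab: "a\<in>C" "b\<in>C"
  have "f a (f b (f n \<mu>)) = f (f a (f b n)) \<mu>" using nucE[OF mu] ab nC cl by simp
  hence "lcoset f (f a (f b (f n \<mu>))) N = lcoset f (f a (f b n)) N" using cos_mu[OF gN] mu ab nC cl by simp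
  also have "\<dots> = lcoset f (f (f a b) n) N" using sE[OF n ab] .
  also have "\<dots> = lcoset f (f (f (f a b) n) \<mu>) N" using cos_mu[OF gN] mu ab nC cl by simp
  also have "f (f (f a b) n) \<mu> = f (f a b) (f n \<mu>)" using nucE[OF mu] ab nC cl by simp
  finally show "lcoset f (f a (f b (f n \<mu>))) N = lcoset f (f (f a b) (f n \<mu>)) N" .
qed

lemma s_mult: assumes n1: "n1\<in>(S N)" and n2: "n2\<in>(S N)" shows "f n1 n2 \<in> (S N)"
proof (rule sI)
  have c1: "n1\<in>C" using sC n1 . have c2: "n2\<in>C" using sC n2 .
  show "f n1 n2 \<in> C" using cl c1 c2 by simp
  fix a b assume ab: "a\<in>C" "b\<in>C"
  have "lcoset f (f a (f b (f n1 n2))) N = lcoset f (f a (f (f b n1) n2)) N"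
    by (rule cos_mult[OF gN]) (use ab c1 c2 cl sE[OF n2, of b n1] in auto)
  also have "\<dots> = lcoset f (f (f a (f b n1)) n2) N" using sE[OF n2, of a "f b n1"] ab c1 cl by simp
  also have "\<dots> = lcoset f (f (f (f a b) n1) n2) N"
    by (rule cos_mult[OF gN]) (use ab c1 c2 cl sE[OF n1, of a b] in auto)
  also have "\<dots> = lcoset f (f (f a b) (f n1 n2)) N" using sE[OF n2, of "f a b" n1] ab c1 cl by simp
  finally show "lcoset f (f a (f b (f n1 n2))) N = lcoset f (f (f a b) (f n1 n2)) N" .
qed

lemma s_swap: assumes n: "n\<in>(S N)" and pq: "p\<in>C" "q\<in>C"
  shows "lcoset f (f n (f p q)) N = lcoset f (f p (f n q)) N"
proof -
  have nC: "n\<in>C" using sC n .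
  have "f n (f p q) = f (f p q) n" using com nC pq cl by simp
  moreover have "f p (f n q) = f p (f q n)" using com nC pq by simp
  ultimately show ?thesis using sE[OF n pq] by simp
qed

lemma s_div: assumes n: "n\<in>(S N)" and w: "w\<in>(S N)" and u: "u\<in>C" and nu: "f n u = w" shows "u \<in> (S N)"
proof (rule sI[OF u])
  have nC: "n\<in>C" using sC n .
  fix a b assume ab: "a\<in>C" "b\<in>C"
  have "lcoset f (f n (f a (f b u))) N = lcoset f (f a (f n (f b u))) N"
    using s_swap[OF n] ab u cl by simp
  also have "\<dots> = lcoset f (f a (f b (f n u))) N"
    by (rule cos_mult[OF gN]) (use ab u nC cl s_swap[OF n, of b u] in auto)
  also have "\<dots> = lcoset f (f (f a b) (f n u)) N" using sE[OF w ab] nu by simp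
  also have "\<dots> = lcoset f (f n (f (f a b) u)) N" using s_swap[OF n, of "f a b" u] ab u cl by simp
  finally show "lcoset f (f a (f b u)) N = lcoset f (f (f a b) u) N"
    using cos_canc[OF gN nC] ab u cl by simp
qed

lemma good_S: "good (S N)"
  unfolding good_def
proof (intro conjI)
  show "E \<in> (S N)" by (rule sI[OF E_in]) (simp add: idr cl)
  show "(S N) \<subseteq> C" using sC by blast
  show "\<forall>x\<in>C. \<forall>y\<in>lcoset f x (S N). lcoset f y (S N) = lcoset f x (S N)"
  proof (intro ballI)
    fix x y assume x: "x\<in>C" and y: "y \<in> lcoset f x (S N)"
    then obtain n0 where n0: "n0\<in>(S N)" "y = f x n0" using lc_mem by blast
    have n0C: "n0\<in>C" using sC n0(1) .
    show "lcoset f y (S N) = lcoset f x (S N)"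
    proof
      show "lcoset f y (S N) \<subseteq> lcoset f x (S N)"
      proof
        fix z assume "z \<in> lcoset f y (S N)"
        then obtain n where n: "n\<in>(S N)" "z = f y n" using lc_mem by blast
        have nC: "n\<in>C" using sC n(1) .
        have "lcoset f (f x (f n0 n)) N = lcoset f (f (f x n0) n) N" using sE[OF n(1) x n0C] .
        then obtain \<mu> where mu: "\<mu>\<in>N" "f (f x n0) n = f (f x (f n0 n)) \<mu>"
          using cos_eq_iff[OF gN] x n0C nC cl by auto
        have "z = f x (f (f n0 n) \<mu>)" using n(2) n0(2) mu nucE[OF mu(1)] x n0C nC cl by simp
        moreover have "f (f n0 n) \<mu> \<in> (S N)" using s_mu[OF s_mult[OF n0(1) n(1)] mu(1)] .
        ultimately show "z \<in> lcoset f x (S N)" using lc_mem by blast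
      qed
      show "lcoset f x (S N) \<subseteq> lcoset f y (S N)"
      proof
        fix z assume "z \<in> lcoset f x (S N)"
        then obtain n where n: "n\<in>(S N)" "z = f x n" using lc_mem by blast
        have nC: "n\<in>C" using sC n(1) .
        define u where "u = the_inv_into C (f n0) n"
        have u: "u\<in>C" "f n0 u = n" using u_def ld_in f_ld n0C nC by auto
        have uS: "u\<in>(S N)" using s_div[OF n0(1) n(1) u] .
        have "lcoset f (f (f x n0) u) N = lcoset f (f x (f n0 u)) N" using sE[OF uS x n0C] by simp
        then obtain \<mu> where mu: "\<mu>\<in>N" "f x (f n0 u) = f (f (f x n0) u) \<mu>"
          using cos_eq_iff[OF gN] x n0C u cl by auto
        have "z = f y (f u \<mu>)" using n(2) n0(2) mu u nucE[OF mu(1)] x n0C cl by simp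
        moreover have "f u \<mu> \<in> (S N)" using s_mu[OF uS mu(1)] .
        ultimately show "z \<in> lcoset f y (S N)" using lc_mem by blast
      qed
    qed
  qed
  show "\<forall>a\<in>C. \<forall>b\<in>C. \<forall>n\<in>(S N). \<forall>n'\<in>(S N). f (f a n) (f b n') \<in> lcoset f (f a b) (S N)"
  proof (intro ballI)
    fix a b n n' assume ab: "a\<in>C" "b\<in>C" and n: "n\<in>(S N)" and n': "n'\<in>(S N)"
    have nC: "n\<in>C" using sC n . have nC': "n'\<in>C" using sC n' .
    have "lcoset f (f (f a n) (f b n')) N = lcoset f (f (f (f a n) b) n') N"
      using sE[OF n', of "f a n" b] ab nC cl by simp
    also have "\<dots> = lcoset f (f (f (f a b) n) n') N"
    proof (rule cos_mult[OF gN])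
      have "lcoset f (f (f a n) b) N = lcoset f (f b (f a n)) N" using com ab nC cl by simp
      also have "\<dots> = lcoset f (f (f b a) n) N" using sE[OF n, of b a] ab by simp
      also have "\<dots> = lcoset f (f (f a b) n) N" using com ab by simp
      finally show "lcoset f (f (f a n) b) N = lcoset f (f (f a b) n) N" .
    qed (use ab nC nC' cl in auto)
    also have "\<dots> = lcoset f (f (f a b) (f n n')) N" using sE[OF n', of "f a b" n] ab nC cl by simp
    finally have "lcoset f (f (f a b) (f n n')) N = lcoset f (f (f a n) (f b n')) N" by simp
    then obtain \<mu> where mu: "\<mu>\<in>N" "f (f a n) (f b n') = f (f (f a b) (f n n')) \<mu>"
      using cos_eq_iff[OF gN] ab nC nC' cl by auto
    have "f (f a n) (f b n') = f (f a b) (f (f n n') \<mu>)" using mu nucE[OF mu(1)] ab nC nC' cl by simp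
    moreover have "f (f n n') \<mu> \<in> (S N)" using s_mu[OF s_mult[OF n n'] mu(1)] .
    ultimately show "f (f a n) (f b n') \<in> lcoset f (f a b) (S N)" using lc_mem by blast
  qed
  show "\<forall>c\<in>C. \<forall>t\<in>C. \<forall>n\<in>(S N). \<exists>n'\<in>(S N). f (f c t) n = f c (f t n')"
  proof (intro ballI)
    fix c t n assume ct: "c\<in>C" "t\<in>C" and n: "n\<in>(S N)"
    have nC: "n\<in>C" using sC n .
    have "lcoset f (f c (f t n)) N = lcoset f (f (f c t) n) N" using sE[OF n ct] .
    then obtain \<mu> where mu: "\<mu>\<in>N" "f (f c t) n = f (f c (f t n)) \<mu>"
      using cos_eq_iff[OF gN] ct nC cl by auto
    have "f (f c t) n = f c (f t (f n \<mu>))" using mu nucE[OF mu(1)] ct nC cl NC'[OF mu(1)] by simp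
    thus "\<exists>n'\<in>(S N). f (f c t) n = f c (f t n')" using s_mu[OF n mu(1)] by blast
  qed
qed

end
end

context cloop begin

lemma lc_single: "x\<in>C \<Longrightarrow> lcoset f x {E} = {x}"
  by (simp add: lcoset_def idr)

lemma good_E: "good {E}"
  unfolding good_def
proof (intro conjI ballI)
  show "E \<in> {E}" by simp
  show "{E} \<subseteq> C" using E_in by simp
  fix x y assume "x\<in>C" "y \<in> lcoset f x {E}"
  thus "lcoset f y {E} = lcoset f x {E}" using lc_single by simp
next
  fix a b n n' assume "a\<in>C" "b\<in>C" "n\<in>{E}" "n'\<in>{E}"
  thus "f (f a n) (f b n') \<in> lcoset f (f a b) {E}" using lc_single idr cl by simp
next
  fix c t n assume "c\<in>C" "t\<in>C" "n\<in>{E}"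
  thus "\<exists>n'\<in>{E}. f (f c t) n = f c (f t n')" using idr cl by simp
qed

lemma nuc_E: "\<forall>\<mu>\<in>{E}. nuc \<mu>"
  by (simp add: nuc_def idr cl)

lemma uc_step: "good N \<Longrightarrow>
  {x\<in>C. lcoset f x N \<in> loop_center (quot_carrier C f N) (quot_mult f N) N} = S N"
  using quot_center unfolding S_def by blast

lemma nuc_Z: "\<forall>\<mu>\<in>S {E}. nuc \<mu>"
proof
  fix \<mu> assume m: "\<mu> \<in> S {E}"
  have mC: "\<mu>\<in>C" using sC[OF m] .
  show "nuc \<mu>" unfolding nuc_def
  proof (intro ballI)
    fix a b assume ab: "a\<in>C" "b\<in>C"
    have "lcoset f (f a (f b \<mu>)) {E} = lcoset f (f (f a b) \<mu>) {E}" using sE[OF m ab] .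
    thus "f a (f b \<mu>) = f (f a b) \<mu>" using lc_single ab mC cl by simp
  qed
qed

lemma good_Z: "good (S {E})" using good_S[OF good_E nuc_E] .
lemma good_Z2: "good (S (S {E}))" using good_S[OF good_Z nuc_Z] .

lemma as_prop: "a\<in>C \<Longrightarrow> b\<in>C \<Longrightarrow> c\<in>C \<Longrightarrow>
   associator C f a b c \<in> C \<and> f (f a (f b c)) (associator C f a b c) = f (f a b) c"
  unfolding associator_def using ld_in f_ld cl by simp

lemma as_uniq: "a\<in>C \<Longrightarrow> b\<in>C \<Longrightarrow> c\<in>C \<Longrightarrow> t\<in>C \<Longrightarrow> f (f a (f b c)) t = f (f a b) c \<Longrightarrow>
   associator C f a b c = t"
  unfolding associator_def using ld_f cl by metis

context
  assumes autom: "\<forall>g\<in>inner C f E. \<forall>x\<in>C. \<forall>y\<in>C. g (f x y) = f (g x) (g y)"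
    and top: "S (S (S {E})) = C"
begin

abbreviation "Z \<equiv> S {E}"
abbreviation "Z2 \<equiv> S (S {E})"

lemma ZC: "z\<in>Z \<Longrightarrow> z\<in>C" using sC .
lemma zn: "z\<in>Z \<Longrightarrow> a\<in>C \<Longrightarrow> b\<in>C \<Longrightarrow> f a (f b z) = f (f a b) z"
  using nuc_Z unfolding nuc_def by blast

lemma Z2C: "v\<in>Z2 \<Longrightarrow> v\<in>C" using sC .

lemma as_Z2: assumes "a\<in>C" "b\<in>C" "c\<in>C" shows "associator C f a b c \<in> Z2"
proof -
  have "c \<in> S Z2" using top assms by simp
  hence "lcoset f (f a (f b c)) Z2 = lcoset f (f (f a b) c) Z2" using sE assms(1,2) by blast
  then obtain n where n: "n\<in>Z2" "f (f a b) c = f (f a (f b c)) n"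
    using cos_eq_iff[OF good_Z2] assms cl by auto
  have "associator C f a b c = n" using as_uniq assms n Z2C by simp
  thus ?thesis using n by simp
qed

lemma zz: assumes "z1\<in>Z" "z2\<in>Z" "X\<in>C" "Y\<in>C"
  shows "f (f X z1) (f Y z2) = f (f X Y) (f z1 z2)"
proof -
  have c: "z1\<in>C" "z2\<in>C" using ZC assms by auto
  have "f (f X z1) (f Y z2) = f (f (f X z1) Y) z2" using zn[OF assms(2)] assms c cl by simp
  also have "f (f X z1) Y = f Y (f X z1)" using com assms c cl by simp
  also have "\<dots> = f (f Y X) z1" using zn[OF assms(1)] assms by simp
  also have "\<dots> = f (f X Y) z1" using com assms by simp
  also have "f (f (f X Y) z1) z2 = f (f X Y) (f z1 z2)" using zn[OF assms(2)] assms c cl by simp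
  finally show ?thesis .
qed

lemma inner_fix: assumes g: "g \<in> inner C f E" and gz: "\<forall>y\<in>C. \<exists>z\<in>Z. g y = f y z"
  and pqr: "p\<in>C" "q\<in>C" "r\<in>C"
  shows "g (associator C f p q r) = associator C f p q r"
proof -
  let ?t = "associator C f p q r"
  have t: "?t\<in>C" "f (f p (f q r)) ?t = f (f p q) r" using as_prop pqr by auto
  obtain zp where zp: "zp\<in>Z" "g p = f p zp" using gz pqr by blast
  obtain zq where zq: "zq\<in>Z" "g q = f q zq" using gz pqr by blast
  obtain zr where zr: "zr\<in>Z" "g r = f r zr" using gz pqr by blast
  obtain zt where zt: "zt\<in>Z" "g ?t = f ?t zt" using gz t by blast
  have zc: "zp\<in>C" "zq\<in>C" "zr\<in>C" "zt\<in>C" using ZC zp zq zr zt by auto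
  have h: "\<And>x y. x\<in>C \<Longrightarrow> y\<in>C \<Longrightarrow> g (f x y) = f (g x) (g y)" using autom g by blast
  have zpq: "f zp zq \<in> Z" using s_mult[OF good_E nuc_E zp(1) zq(1)] .
  have zqr: "f zq zr \<in> Z" using s_mult[OF good_E nuc_E zq(1) zr(1)] .
  define D where "D = f zp (f zq zr)"
  have Dz: "D \<in> Z" unfolding D_def using s_mult[OF good_E nuc_E zp(1) zqr] .
  have DC: "D\<in>C" using ZC Dz .
  have "g (f (f p q) r) = f (f (f p zp) (f q zq)) (f r zr)" using h pqr cl zp zq zr by simp
  also have "\<dots> = f (f (f p q) (f zp zq)) (f r zr)" using zz[OF zp(1) zq(1) pqr(1,2)] by simp
  also have "\<dots> = f (f (f p q) r) (f (f zp zq) zr)" using zz[OF zpq zr(1)] pqr cl by simp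
  also have "f (f zp zq) zr = D" unfolding D_def using zn[OF zr(1)] zc by simp
  finally have L: "g (f (f p q) r) = f (f (f p q) r) D" .
  have G1: "g (f (f p (f q r)) ?t) = f (g (f p (f q r))) (g ?t)" using h[of "f p (f q r)" ?t] pqr cl t(1) by blast
  have G2: "g (f p (f q r)) = f (g p) (g (f q r))" using h pqr cl by blast
  have G3: "g (f q r) = f (g q) (g r)" using h pqr by blast
  have "g (f (f p (f q r)) ?t) = f (f (f p zp) (f (f q zq) (f r zr))) (f ?t zt)"
    using zp zq zr zt by (simp only: G1 G2 G3)
  also have "\<dots> = f (f (f p zp) (f (f q r) (f zq zr))) (f ?t zt)" using zz[OF zq(1) zr(1) pqr(2,3)] by simp
  also have "\<dots> = f (f (f p (f q r)) D) (f ?t zt)" using zz[OF zp(1) zqr] pqr cl D_def by simp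
  also have "\<dots> = f (f (f p (f q r)) ?t) (f D zt)" using zz[OF Dz zt(1)] pqr cl t by simp
  finally have R: "g (f (f p (f q r)) ?t) = f (f (f p q) r) (f D zt)" using t by simp
  have "f (f (f p q) r) D = f (f (f p q) r) (f D zt)" using L R t(2) by simp
  hence "D = f D zt" by (rule canc[OF cl[OF cl[OF pqr(1,2)] pqr(3)] DC cl[OF DC zc(4)]])
  hence "f D E = f D zt" using idr DC by simp
  hence "E = zt" by (rule canc[OF DC E_in zc(4)])
  hence "zt = E" by simp
  thus ?thesis using zt idr t by simp
qed

lemma phi_fix: assumes abc: "a\<in>C" "b\<in>C"
  and co: "\<forall>y\<in>C. lcoset f (f a (f b y)) Z = lcoset f (f (f a b) y) Z"
  and pqr: "p\<in>C" "q\<in>C" "r\<in>C"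
  shows "f a (f b (associator C f p q r)) = f (f a b) (associator C f p q r)"
proof -
  let ?c = "f a b"
  let ?g = "\<lambda>y\<in>C. the_inv_into C (f ?c) (f a (f b y))"
  have cC: "?c\<in>C" using cl abc by simp
  have "?g \<in> mlt C f" using mlt_L3 abc cC by blast
  moreover have "?g E = E" using abc E_in idr cC ld_f[of ?c E] by simp
  ultimately have gi: "?g \<in> inner C f E" by (simp add: inner_def)
  have gz: "\<forall>y\<in>C. \<exists>z\<in>Z. ?g y = f y z"
  proof
    fix y assume y: "y\<in>C"
    obtain z where z: "z\<in>Z" "f a (f b y) = f (f ?c y) z"
      using co y cos_eq_iff[OF good_Z, of "f ?c y" "f a (f b y)"] cl abc cC by auto
    have "f a (f b y) = f ?c (f y z)" using z zn[OF z(1)] cC y by simp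
    hence "?g y = f y z" using y ld_f cC cl ZC z(1) by simp
    thus "\<exists>z\<in>Z. ?g y = f y z" using z(1) by blast
  qed
  let ?t = "associator C f p q r"
  have t: "?t\<in>C" using as_prop pqr by simp
  have "?g ?t = ?t" using inner_fix[OF gi gz pqr] .
  hence "the_inv_into C (f ?c) (f a (f b ?t)) = ?t" using t by simp
  thus ?thesis using f_ld[of ?c "f a (f b ?t)"] cC t abc cl by metis
qed

lemma K: assumes x: "x\<in>C" and pqr: "p\<in>C" "q\<in>C" "r\<in>C" and v: "v\<in>Z2"
  shows "f (f x (associator C f p q r)) v = f x (f (associator C f p q r) v)"
proof -
  let ?u = "associator C f p q r"
  have u: "?u\<in>C" using as_prop pqr by simp
  have vC: "v\<in>C" using Z2C v .
  have sv: "\<And>a b. a\<in>C \<Longrightarrow> b\<in>C \<Longrightarrow> lcoset f (f a (f b v)) Z = lcoset f (f (f a b) v) Z"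
    using sE[OF v] .
  have key: "lcoset f (f (f v x) y) Z = lcoset f (f (f x y) v) Z" if y: "y\<in>C" for y
  proof -
    have "f (f v x) y = f y (f x v)" using com vC x y cl by simp
    hence "lcoset f (f (f v x) y) Z = lcoset f (f (f y x) v) Z" using sv y x by simp
    thus ?thesis using com x y by simp
  qed
  have c1: "\<forall>y\<in>C. lcoset f (f v (f x y)) Z = lcoset f (f (f v x) y) Z"
  proof
    fix y assume y: "y\<in>C"
    have "f v (f x y) = f (f x y) v" using com vC x y cl by simp
    thus "lcoset f (f v (f x y)) Z = lcoset f (f (f v x) y) Z" using key y by simp
  qed
  have c2: "\<forall>y\<in>C. lcoset f (f x (f v y)) Z = lcoset f (f (f x v) y) Z"
  proof
    fix y assume y: "y\<in>C"
    have "f x (f v y) = f x (f y v)" using com vC y by simp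
    hence "lcoset f (f x (f v y)) Z = lcoset f (f (f x y) v) Z" using sv x y by simp
    also have "\<dots> = lcoset f (f (f v x) y) Z" using key y by simp
    also have "f v x = f x v" using com vC x by simp
    finally show "lcoset f (f x (f v y)) Z = lcoset f (f (f x v) y) Z" .
  qed
  have e1: "f v (f x ?u) = f (f v x) ?u" using phi_fix[OF vC x c1 pqr] .
  have e2: "f x (f v ?u) = f (f x v) ?u" using phi_fix[OF x vC c2 pqr] .
  have "f (f x ?u) v = f v (f x ?u)" using com x u vC cl by simp
  also have "\<dots> = f (f x v) ?u" using e1 com x vC by simp
  also have "\<dots> = f x (f v ?u)" using e2 by simp
  also have "\<dots> = f x (f ?u v)" using com u vC by simp
  finally show ?thesis .
qed

lemma final: assumes abc: "a\<in>C" "b\<in>C" "c\<in>C"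
  shows "associator C f a b c = loop_inv C f E (associator C f c b a)
    \<and> associator C f a b c = f (associator C f a c b) (associator C f b a c)"
proof
  let ?v = "associator C f a b c" and ?u = "associator C f c b a"
  let ?x = "f (f a b) c"
  have v: "?v\<in>C" "f (f a (f b c)) ?v = ?x" using as_prop abc by auto
  have u: "?u\<in>C" "f (f c (f b a)) ?u = f (f c b) a" using as_prop abc by auto
  have xC: "?x\<in>C" using cl abc by simp
  have "f c (f b a) = ?x" using com abc cl by simp
  moreover have "f (f c b) a = f a (f b c)" using com abc cl by simp
  ultimately have xu: "f ?x ?u = f a (f b c)" using u by simp
  have "f (f ?x ?u) ?v = ?x" using xu v by simp
  moreover have "f (f ?x ?u) ?v = f ?x (f ?u ?v)" using K[OF xC abc(3,2,1) as_Z2[OF abc]] .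
  ultimately have "f ?x (f ?u ?v) = f ?x E" using idr xC by simp
  hence uv: "f ?u ?v = E" using canc xC u v cl E_in by blast
  show "?v = loop_inv C f E ?u" unfolding loop_inv_def using ld_f[OF u(1) v(1)] uv by simp
next
  let ?v = "associator C f a b c" and ?p = "associator C f a c b" and ?q = "associator C f b a c"
  let ?y = "f a (f b c)"
  have v: "?v\<in>C" "f ?y ?v = f (f a b) c" using as_prop abc by auto
  have p: "?p\<in>C" "f (f a (f c b)) ?p = f (f a c) b" using as_prop abc by auto
  have q: "?q\<in>C" "f (f b (f a c)) ?q = f (f b a) c" using as_prop abc by auto
  have yC: "?y\<in>C" using cl abc by simp
  have "f b (f a c) = f (f a c) b" using com abc cl by simp
  also have "\<dots> = f ?y ?p" using p com abc by simp
  finally have bac: "f b (f a c) = f ?y ?p" .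
  have "f ?y ?v = f (f b a) c" using v com abc by simp
  also have "\<dots> = f (f ?y ?p) ?q" using q bac by simp
  also have "\<dots> = f ?y (f ?p ?q)" using K[OF yC abc(1,3,2) as_Z2[OF abc(2,1,3)]] .
  finally show "?v = f ?p ?q" using canc yC v p q cl by blast
qed

end
end

theorem lemma2p7:
  fixes Q :: "'a set" and m :: "'a \<Rightarrow> 'a \<Rightarrow> 'a" and e :: 'a
  assumes "automorphic_loop Q m e"
    and "commutative_loop Q m"
    and "nilpotency_class Q m e 3"
  shows "\<forall>a\<in>Q. \<forall>b\<in>Q. \<forall>c\<in>Q.
           associator Q m a b c = loop_inv Q m e (associator Q m c b a)
         \<and> associator Q m a b c = m (associator Q m a c b) (associator Q m b a c)"
proof -
  have lp: "loop Q m e" using assms(1) by (simp add: automorphic_loop_def)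
  interpret cloop Q m e using lp assms(2) by (simp add: cloop_def)
  have autom: "\<forall>g\<in>inner Q m e. \<forall>x\<in>Q. \<forall>y\<in>Q. g (m x y) = m (g x) (g y)"
    using assms(1) by (simp add: automorphic_loop_def)
  have step: "upper_center Q m e (Suc i) = S (upper_center Q m e i)"
    if "good (upper_center Q m e i)" for i
    using uc_step[OF that] by (simp only: upper_center.simps)
  have u1: "upper_center Q m e (Suc 0) = S {e}"
    using step[of 0] good_E by (simp only: upper_center.simps(1))
  have u2: "upper_center Q m e (Suc (Suc 0)) = S (S {e})"
    using step[of "Suc 0"] good_Z by (simp only: u1)
  have u3: "upper_center Q m e (Suc (Suc (Suc 0))) = S (S (S {e}))"
    using step[of "Suc (Suc 0)"] good_Z2 by (simp only: u2)
  have "(3::nat) = Suc (Suc (Suc 0))" by simp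
  hence u3': "upper_center Q m e 3 = S (S (S {e}))" using u3 by (simp only:)
  have "upper_center Q m e 3 = Q" using assms(3) unfolding nilpotency_class_def by blast
  hence top: "S (S (S {e})) = Q" using u3' by (simp only:)
  show ?thesis using final[OF autom top] by (intro ballI)
qed

end
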